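(* Let $d_A,d_B,r\in\mathbb{N}$ and let $O\subset\mathcal{C}_{d_A,d_B,r}$ be a non-empty open subset. Let $Z=(d_A,d_B,d_C,p,h)$ be a quantum circuit topology with $p<2d_Ad_Br-d_A^2-r^2$ or $d_C<r$. Then $H(Z)\cap O$ has measure zero in the smooth manifold $O$.
   Context: For $s\leqslant m$, $V_{s,m}=\{V\in\mathbb{C}^{m\times s}:V^{\ast}V=I\}$. $\mathcal{C}_{d_A,d_B}$ is the set of positive semi-definite $C\in\mathbb{C}^{d_Ad_B\times d_Ad_B}$ (on $\mathbb{C}^{d_A}\otimes\mathbb{C}^{d_B}$) with $\mathrm{tr}_B C=\frac{1}{d_A}I$, and $\mathcal{C}_{d_A,d_B,r}$ its elements of rank $r$; $\mathcal{C}_{d_A,d_B,r}$ is a smooth embedded submanifold of $\mathbb{C}^{d_Ad_B\times d_Ad_B}\cong\mathbb{R}^{2d_A^2d_B^2}$ of dimension $2d_Ad_Br-d_A^2-r^2$. A quantum circuit topology is a 5-tuple $Z=(d_A,d_B,d_C,p,h)$ with $d_Bd_C\geqslant d_A$, $p\in\mathbb{N}_0$ and $h:[0,2\pi]^p\to V_{d_A,d_Bd_C}$ smooth. For $V\in V_{d_A,d_Cd_B}$ let $\mathcal{E}_V(M)=\mathrm{tr}_C(VMV^{\ast})$ with $\mathrm{tr}_C(X)=\sum_{i=1}^{d_C}(\langle i|\otimes I_{d_B})X(|i\rangle\otimes I_{d_B})$, and $T(V)=\frac{1}{d_A}\sum_{i,j=1}^{d_A}|i\rangle\langle j|\otimes\mathcal{E}_V(|i\rangle\langle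 j|)$. Then $H(Z):=T(h([0,2\pi]^p))$. *)

theory Defs
  imports "HOL-Analysis.Analysis"
begin

definition cadj :: "complex^('n::finite)^('m::finite) \<Rightarrow> complex^'m^'n" where
  "cadj A = (\<chi> i j. cnj (A $ j $ i))"

definition isometry_mat :: "complex^('a::finite)^('m::finite) \<Rightarrow> bool" where
  "isometry_mat V \<longleftrightarrow> cadj V ** V = mat 1"

definition psd :: "complex^('n::finite)^'n \<Rightarrow> bool" where
  "psd C \<longleftrightarrow> (\<forall>x::complex^'n.
      let q = (\<Sum>i\<in>UNIV. \<Sum>j\<in>UNIV. cnj (x $ i) * C $ i $ j * x $ j)
      in Im q = 0 \<and> Re q \<ge> 0)"

text \<open>Partial trace over the second tensor factor B (space C^dA (x) C^dB indexed by 'a \<times> 'b).\<close>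
definition ptrace_B :: "complex^('a::finite\<times>'b::finite)^('a\<times>'b) \<Rightarrow> complex^'a^'a" where
  "ptrace_B C = (\<chi> a a'. \<Sum>b\<in>UNIV. C $ (a, b) $ (a', b))"

text \<open>Partial trace over the first factor C of C^dC (x) C^dB (indexed by 'c \<times> 'b).\<close>
definition ptrace_C :: "complex^('c::finite\<times>'b::finite)^('c\<times>'b) \<Rightarrow> complex^'b^'b" where
  "ptrace_C X = (\<chi> b b'. \<Sum>c\<in>UNIV. X $ (c, b) $ (c, b'))"

definition choi_set :: "(complex^('a::finite\<times>'b::finite)^('a\<times>'b)) set" where
  "choi_set = {C. psd C \<and> ptrace_B C = (1 / of_nat CARD('a)) *\<^sub>R mat 1}"

definition choi_set_rank :: "nat \<Rightarrow> (complex^('a::finite\<times>'b::finite)^('a\<times>'b)) set" where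
  "choi_set_rank r = {C \<in> choi_set. rank C = r}"

definition matunit :: "'a::finite \<Rightarrow> 'a \<Rightarrow> complex^'a^'a" where
  "matunit i j = (\<chi> x y. if x = i \<and> y = j then 1 else 0)"

definition chan :: "complex^('a::finite)^('c::finite\<times>'b::finite) \<Rightarrow> complex^'a^'a \<Rightarrow> complex^'b^'b" where
  "chan V M = ptrace_C (V ** M ** cadj V)"

text \<open>Choi map T(V) = (1/dA) \<Sum>_{i,j} |i><j| (x) E_V(|i><j|); entry ((i,b),(j,b')).\<close>
definition choi :: "complex^('a::finite)^('c::finite\<times>'b::finite) \<Rightarrow> complex^('a\<times>'b)^('a\<times>'b)" where
  "choi V = (\<chi> x y. (1 / of_nat CARD('a)) * chan V (matunit (fst x) (fst y)) $ snd x $ snd y)"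

fun Ck_on :: "nat \<Rightarrow> ('a::euclidean_space \<Rightarrow> 'b::real_normed_vector) \<Rightarrow> 'a set \<Rightarrow> bool" where
  "Ck_on 0 f U = continuous_on U f"
| "Ck_on (Suc n) f U = (f differentiable_on U \<and>
      (\<forall>e\<in>Basis. Ck_on n (\<lambda>x. frechet_derivative f (at x) e) U))"

definition smooth_on :: "'a::euclidean_space set \<Rightarrow> ('a \<Rightarrow> 'b::real_normed_vector) \<Rightarrow> bool" where
  "smooth_on U f \<longleftrightarrow> open U \<and> (\<forall>n. Ck_on n f U)"

text \<open>Local parametrisation (inverse of a chart) of an embedded submanifold M with model
  space real^'k: a smooth immersion of an open set onto an open subset of M which is a
  homeomorphism onto its image.\<close>
definition local_param :: "'v::real_normed_vector set \<Rightarrow> (real^'k::finite) set \<Rightarrow> (real^'k \<Rightarrow> 'v) \<Rightarrow> bool" where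
  "local_param M U \<psi> \<longleftrightarrow> open U \<and> smooth_on U \<psi> \<and>
     (\<forall>x\<in>U. inj (frechet_derivative \<psi> (at x))) \<and>
     \<psi> ` U \<subseteq> M \<and> openin (top_of_set M) (\<psi> ` U) \<and>
     (\<exists>g. homeomorphism U (\<psi> ` U) \<psi> g)"

text \<open>S has measure zero in the CARD('k)-dimensional submanifold M: its preimage under
  every chart parametrisation is Lebesgue-null.\<close>
definition null_in_manifold :: "'k::finite itself \<Rightarrow> 'v::real_normed_vector set \<Rightarrow> 'v set \<Rightarrow> bool" where
  "null_in_manifold _ M S \<longleftrightarrow>
     (\<forall>U (\<psi>::real^'k \<Rightarrow> 'v). local_param M U \<psi> \<longrightarrow> {x \<in> U. \<psi> x \<in> S} \<in> null_sets lebesgue)"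

text \<open>The parameter cube [0,2\<pi>]^p, realised inside real^'p on the coordinates I (card I = p);
  the remaining coordinates are 0. This allows p = 0.\<close>
definition param_cube :: "'p::finite set \<Rightarrow> (real^'p) set" where
  "param_cube I = {\<theta>. \<forall>i. if i \<in> I then 0 \<le> \<theta> $ i \<and> \<theta> $ i \<le> 2 * pi else \<theta> $ i = 0}"

definition smooth_on_closed :: "(real^'p::finite) set \<Rightarrow> (real^'p \<Rightarrow> 'b::real_normed_vector) \<Rightarrow> bool" where
  "smooth_on_closed K h \<longleftrightarrow> (\<exists>U g. K \<subseteq> U \<and> smooth_on U g \<and> (\<forall>x\<in>K. g x = h x))"

text \<open>Z = (dA, dB, dC, p, h) with dA = CARD('a), dB = CARD('b), dC = CARD('c), p = card I.\<close>
definition circuit_topology :: "'p::finite set \<Rightarrow> (real^'p \<Rightarrow> complex^('a::finite)^('c::finite\<times>'b::finite)) \<Rightarrow> bool" where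
  "circuit_topology I h \<longleftrightarrow> CARD('b) * CARD('c) \<ge> CARD('a) \<and>
     smooth_on_closed (param_cube I) h \<and> (\<forall>\<theta>\<in>param_cube I. isometry_mat (h \<theta>))"

definition H_set :: "'p::finite set \<Rightarrow> (real^'p \<Rightarrow> complex^('a::finite)^('c::finite\<times>'b::finite))
    \<Rightarrow> (complex^('a\<times>'b)^('a\<times>'b)) set" where
  "H_set I h = choi ` h ` param_cube I"

end

theory Submission
  imports Defs
begin
lemma choi_entry: "choi V $ x $ y = (1 / of_nat CARD('a)) * (\<Sum>c\<in>UNIV. V $ (c, snd x) $ fst x * cnj (V $ (c, snd y) $ fst y))"
  for V :: "complex^('a::finite)^('c::finite\<times>'b::finite)"
proof -
  have "(V ** matunit i j ** cadj V) $ p $ q = V $ p $ i * cnj (V $ q $ j)" for i j p q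
  proof -
    have e: "(\<Sum>ka\<in>UNIV. V $ p $ ka * (if ka = i \<and> k = j then 1 else 0)) = (if k = j then V $ p $ i else 0)" for k
    proof (cases "k = j")
      case True
      have "(\<Sum>ka\<in>UNIV. V $ p $ ka * (if ka = i \<and> k = j then 1 else 0)) = (\<Sum>ka\<in>UNIV. if ka = i then V $ p $ ka else 0)"
        using True by (intro sum.cong) auto
      then show ?thesis using True by simp
    qed simp
    show ?thesis
      by (simp add: matrix_matrix_mult_def matunit_def cadj_def e if_distrib[where f="\<lambda>z. z * _"] cong: if_cong)
  qed
  then show ?thesis by (simp add: choi_def chan_def ptrace_C_def)
qed

lemma vec_lambda_diff:
  fixes g :: "'i::finite \<Rightarrow> 'x::real_normed_vector \<Rightarrow> 'y::real_normed_vector"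
  assumes "\<And>i. g i differentiable (at z within S)"
  shows "(\<lambda>x. \<chi> i. g i x) differentiable (at z within S)"
proof -
  have eq: "(\<lambda>x. \<chi> i. g i x) = (\<lambda>x. \<Sum>i\<in>UNIV. axis i (g i x))"
    by (auto simp: vec_eq_iff sum_component axis_def if_distrib sum.delta cong: if_cong)
  have bl: "bounded_linear (axis i :: 'y \<Rightarrow> 'y^'i)" for i :: "'i"
  proof (rule bounded_linear_intro[where K=1])
    show "axis i (x + y) = axis i x + axis i y" for x y :: 'y by (simp add: vec_eq_iff axis_def)
    show "axis i (r *\<^sub>R x) = r *\<^sub>R axis i x" for r and x :: 'y by (auto simp: vec_eq_iff axis_def)
    show "norm (axis i x) \<le> norm x * 1" for x :: 'y
      using L2_set_le_sum[of UNIV "\<lambda>j. norm (axis i x $ j)"]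
      by (simp add: norm_vec_def axis_def if_distrib cong: if_cong)
  qed
  show ?thesis unfolding eq
    apply (rule differentiable_sum, simp)
    using differentiable_compose[OF bounded_linear_imp_differentiable[OF bl] assms]
    by (auto simp: o_def)
qed

lemma bl_entry: "bounded_linear (\<lambda>V::'x::real_normed_vector^'n::finite^'m::finite. V $ p $ q)"
  using bounded_linear_compose[OF bounded_linear_vec_nth bounded_linear_vec_nth] .

lemma choi_diff: "choi differentiable (at V within S)"
  for V :: "complex^('a::finite)^('c::finite\<times>'b::finite)"
proof -
  have eq: "choi = (\<lambda>V::complex^('a::finite)^('c::finite\<times>'b::finite). \<chi> x. \<chi> y. (1 / of_nat CARD('a)) * (\<Sum>c\<in>UNIV. V $ (c, snd x) $ fst x * cnj (V $ (c, snd y) $ fst y)))"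
    by (auto simp: vec_eq_iff choi_entry)
  have d1: "(\<lambda>V::complex^('a::finite)^('c::finite\<times>'b::finite). V $ p $ q) differentiable (at V within S)" for p q
    by (rule bounded_linear_imp_differentiable[OF bl_entry])
  have d2: "(\<lambda>V::complex^('a::finite)^('c::finite\<times>'b::finite). cnj (V $ p $ q)) differentiable (at V within S)" for p q
    by (rule bounded_linear_imp_differentiable[OF bounded_linear_compose[OF bounded_linear_cnj bl_entry]])
  show ?thesis unfolding eq
    by (intro vec_lambda_diff differentiable_mult differentiable_sum ballI d1 d2 differentiable_const) simp
qed

lemma rank_choi: "rank (choi V) \<le> CARD('c)"
  for V :: "complex^('a::finite)^('c::finite\<times>'b::finite)"
proof -
  define W :: "complex^'c^('a\<times>'b)" where "W = (\<chi> x c. V $ (c, snd x) $ fst x)"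
  define X :: "complex^('a\<times>'b)^'c" where "X = (\<chi> c y. (1 / of_nat CARD('a)) * cnj (V $ (c, snd y) $ fst y))"
  have rowe: "(choi V) $ x = (\<Sum>c\<in>UNIV. (W $ x $ c) *s (X $ c))" for x
    by (simp add: vec_eq_iff choi_entry W_def X_def sum_component sum_distrib_left mult_ac)
  have "rows (choi V) \<subseteq> vec.span (rows X)"
  proof
    fix v assume "v \<in> rows (choi V)"
    then obtain x where v: "v = choi V $ x" by (auto simp: rows_def row_def vec_lambda_eta)
    have "X $ c \<in> rows X" for c by (auto simp: rows_def row_def vec_lambda_eta)
    then show "v \<in> vec.span (rows X)" unfolding v rowe
      by (intro vec.span_sum vec.span_scale vec.span_base)
  qed
  moreover have rX: "rows X = range (\<lambda>c. row c X)" by (auto simp: rows_def)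
  ultimately have "vec.dim (rows (choi V)) \<le> card (rows X)"
    by (intro vec.dim_le_card) auto
  also have "card (rows X) \<le> CARD('c)"
    using rX by (metis card_image_le finite)
  finally show ?thesis by (simp add: row_rank_def_gen)
qed
lemma inj_deriv_lower:
  fixes \<psi> :: "'x::euclidean_space \<Rightarrow> 'v::euclidean_space"
  assumes der: "(\<psi> has_derivative D) (at x0)" and inj: "inj D"
  obtains c \<delta> where "c > 0" "\<delta> > 0"
    "\<And>x. norm (x - x0) < \<delta> \<Longrightarrow> c * norm (x - x0) \<le> norm (\<psi> x - \<psi> x0)"
proof -
  have lin: "linear D" using der has_derivative_linear by blast
  obtain B where B: "B > 0" "\<And>v. B * norm v \<le> norm (D v)"
    using linear_inj_bounded_below_pos[OF lin inj] by blast
  have "\<forall>e>0. \<exists>d>0. \<forall>y. norm (y - x0) < d \<longrightarrow> norm (\<psi> y - \<psi> x0 - D (y - x0)) \<le> e * norm (y - x0)"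
    using der by (simp add: has_derivative_at_alt)
  then have "\<exists>d>0. \<forall>y. norm (y - x0) < d \<longrightarrow> norm (\<psi> y - \<psi> x0 - D (y - x0)) \<le> (B/2) * norm (y - x0)"
    using B(1) by (intro mp[OF spec[OF \<open>\<forall>e>0. _\<close>, of "B/2"]]) simp
  then obtain d where d: "d > 0" "\<And>y. norm (y - x0) < d \<Longrightarrow> norm (\<psi> y - \<psi> x0 - D (y - x0)) \<le> (B/2) * norm (y - x0)"
    by blast
  have "(B/2) * norm (x - x0) \<le> norm (\<psi> x - \<psi> x0)" if "norm (x - x0) < d" for x
  proof -
    have "D (x - x0) = (\<psi> x - \<psi> x0) - (\<psi> x - \<psi> x0 - D (x - x0))" by simp
    then have "norm (D (x - x0)) \<le> norm (\<psi> x - \<psi> x0) + norm (\<psi> x - \<psi> x0 - D (x - x0))"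
      by (metis norm_triangle_ineq4)
    then show ?thesis using B(2)[of "x - x0"] d(2)[OF that] by linarith
  qed
  then show ?thesis using that[of "B/2" d] B d by auto
qed

lemma deriv_upper:
  fixes \<phi> :: "'x::real_normed_vector \<Rightarrow> 'v::real_normed_vector"
  assumes "\<phi> differentiable (at y0)"
  obtains B \<delta> where "\<delta> > 0" "\<And>y. norm (y - y0) < \<delta> \<Longrightarrow> norm (\<phi> y - \<phi> y0) \<le> B * norm (y - y0)"
proof -
  obtain D where der: "(\<phi> has_derivative D) (at y0)" using assms by (auto simp: differentiable_def)
  then have bl: "bounded_linear D" by (simp add: has_derivative_at_alt)
  obtain K where K: "\<And>v. norm (D v) \<le> norm v * K" using bounded_linear.bounded[OF bl] by blast
  have "\<forall>e>0. \<exists>d>0. \<forall>y. norm (y - y0) < d \<longrightarrow> norm (\<phi> y - \<phi> y0 - D (y - y0)) \<le> e * norm (y - y0)"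
    using der by (simp add: has_derivative_at_alt)
  then have "\<exists>d>0. \<forall>y. norm (y - y0) < d \<longrightarrow> norm (\<phi> y - \<phi> y0 - D (y - y0)) \<le> 1 * norm (y - y0)"
    by (intro mp[OF spec[OF \<open>\<forall>e>0. _\<close>, of 1]]) simp
  then obtain d where d: "d > 0" "\<And>y. norm (y - y0) < d \<Longrightarrow> norm (\<phi> y - \<phi> y0 - D (y - y0)) \<le> 1 * norm (y - y0)"
    by blast
  have "norm (\<phi> y - \<phi> y0) \<le> (K + 1) * norm (y - y0)" if "norm (y - y0) < d" for y
  proof -
    have "\<phi> y - \<phi> y0 = D (y - y0) + (\<phi> y - \<phi> y0 - D (y - y0))" by simp
    then have "norm (\<phi> y - \<phi> y0) \<le> norm (D (y - y0)) + norm (\<phi> y - \<phi> y0 - D (y - y0))"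
      by (metis norm_triangle_ineq)
    then show ?thesis using K[of "y - y0"] d(2)[OF that] by (simp add: algebra_simps)
  qed
  then show ?thesis using that d by blast
qed

theorem lemma9:
  fixes U :: "(complex^('a::finite\<times>'b::finite)^('a\<times>'b)) set"
    and r :: nat
    and I :: "'p::finite set"
    and h :: "real^'p \<Rightarrow> complex^'a^('c::finite\<times>'b)"
  assumes dimk: "int CARD('k::finite) =
      2 * int CARD('a) * int CARD('b) * int r - int CARD('a) ^ 2 - int r ^ 2"
    and O_open: "openin (top_of_set (choi_set_rank r)) U"
    and O_ne: "U \<noteq> {}"
    and Z: "circuit_topology I h"
    and cond: "card I < CARD('k) \<or> CARD('c) < r"
  shows "null_in_manifold TYPE('k) U (H_set I h \<inter> U)"
  unfolding null_in_manifold_def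
proof (intro allI impI)
  fix W and \<psi> :: "real^'k \<Rightarrow> complex^('a\<times>'b)^('a\<times>'b)"
  assume lp: "local_param U W \<psi>"
  then have Wo: "open W" and sm: "smooth_on W \<psi>"
    and injD: "\<forall>x\<in>W. inj (frechet_derivative \<psi> (at x))"
    and hom0: "\<exists>g. homeomorphism W (\<psi> ` W) \<psi> g"
    by (auto simp: local_param_def)
  from hom0 obtain g where hom: "homeomorphism W (\<psi> ` W) \<psi> g" by blast
  have Usub: "U \<subseteq> choi_set_rank r" using O_open by (rule openin_imp_subset)
  show "{x \<in> W. \<psi> x \<in> H_set I h \<inter> U} \<in> null_sets lebesgue"
  proof (cases "CARD('c) < r")
    case True
    have "H_set I h \<inter> U = {}"
    proof (intro equalityI subsetI)
      fix z assume z: "z \<in> H_set I h \<inter> U"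
      then obtain V :: "complex^'a^('c\<times>'b)" where "z = choi V" by (auto simp: H_set_def)
      moreover have "rank z = r" using z Usub by (auto simp: choi_set_rank_def)
      ultimately show "z \<in> {}" using rank_choi[of V] True by simp
    qed simp
    then show ?thesis by simp
  next
    case False
    with cond have lt: "card I < CARD('k)" by auto
    obtain \<Omega> hx where cubeO: "param_cube I \<subseteq> \<Omega>" and smh: "smooth_on \<Omega> hx"
      and agree: "\<forall>\<theta>\<in>param_cube I. hx \<theta> = h \<theta>"
      using Z by (auto simp: circuit_topology_def smooth_on_closed_def)
    have Oo: "open \<Omega>" using smh by (simp add: smooth_on_def)
    have hxd: "hx differentiable_on \<Omega>"
      using smh unfolding smooth_on_def by (metis Ck_on.simps(2))
    have psid: "\<psi> differentiable_on W"
      using sm unfolding smooth_on_def by (metis Ck_on.simps(2))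
    obtain j :: "'p \<Rightarrow> 'k" where jinj: "inj_on j I"
      using card_le_inj[of I "UNIV :: 'k set"] lt by auto
    have "card (j ` I) < CARD('k)" using lt by (simp add: card_image jinj)
    then have "j ` I \<noteq> UNIV" by auto
    then obtain m where m: "m \<notin> j ` I" by blast
    define E :: "real^'k \<Rightarrow> real^'p" where "E y = (\<chi> i. if i \<in> I then y $ j i else 0)" for y
    have Ed: "E differentiable (at y)" for y
    proof -
      have "(\<lambda>y::real^'k. if i \<in> I then y $ j i else 0) differentiable (at y)" for i
        by (cases "i \<in> I") (auto intro: bounded_linear_imp_differentiable)
      then show ?thesis unfolding E_def by (rule vec_lambda_diff)
    qed
    define \<phi> where "\<phi> y = choi (hx (E y))" for y
    define S where "S = {y. y $ m = 0 \<and> E y \<in> param_cube I \<and> \<phi> y \<in> \<psi> ` W}"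
    have negS: "negligible S"
      by (rule negligible_subset[OF negligible_standard_hyperplane_cart[of m]]) (auto simp: S_def)
    have Psub: "{x \<in> W. \<psi> x \<in> H_set I h \<inter> U} \<subseteq> (g \<circ> \<phi>) ` S"
    proof
      fix x assume "x \<in> {x \<in> W. \<psi> x \<in> H_set I h \<inter> U}"
      then obtain \<theta> where xW: "x \<in> W" and th: "\<theta> \<in> param_cube I" "\<psi> x = choi (h \<theta>)"
        by (auto simp: H_set_def)
      define y :: "real^'k" where "y = (\<chi> k. if k \<in> j ` I then \<theta> $ (inv_into I j k) else 0)"
      have Ey: "E y = \<theta>"
      proof (subst vec_eq_iff, intro allI)
        fix i
        show "E y $ i = \<theta> $ i"
        proof (cases "i \<in> I")
          case True then show ?thesis by (simp add: E_def y_def inv_into_f_f jinj)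
        next
          case False then show ?thesis using th(1) by (simp add: E_def param_cube_def)
        qed
      qed
      have py: "\<phi> y = \<psi> x" using Ey agree th by (simp add: \<phi>_def)
      have pyW: "\<phi> y \<in> \<psi> ` W" using py xW by simp
      have "y $ m = 0" using m by (simp add: y_def)
      then have "y \<in> S" using pyW Ey th(1) by (simp add: S_def)
      moreover have "(g \<circ> \<phi>) y = x" using py homeomorphism_apply1[OF hom xW] by simp
      ultimately show "x \<in> (g \<circ> \<phi>) ` S" by force
    qed
    have "negligible ((g \<circ> \<phi>) ` S)"
    proof (rule negligible_locally_Lipschitz_image[OF _ negS])
      show "DIM(real^'k) \<le> DIM(real^'k)" by simp
    next
      fix y0 assume y0: "y0 \<in> S"
      then have Ey0: "E y0 \<in> param_cube I" and py0: "\<phi> y0 \<in> \<psi> ` W" by (auto simp: S_def)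
      define x0 where "x0 = g (\<phi> y0)"
      have x0W: "x0 \<in> W" using py0 hom unfolding x0_def by (metis homeomorphism_image2 imageI)
      have psix0: "\<psi> x0 = \<phi> y0" using homeomorphism_apply2[OF hom py0] by (simp add: x0_def)
      have "\<psi> differentiable (at x0)"
        using psid x0W Wo by (metis at_within_open differentiable_on_def)
      then have der: "(\<psi> has_derivative frechet_derivative \<psi> (at x0)) (at x0)"
        by (simp add: frechet_derivative_works[symmetric])
      obtain c \<delta> where c: "c > 0" "\<delta> > 0"
        and low: "\<And>x. norm (x - x0) < \<delta> \<Longrightarrow> c * norm (x - x0) \<le> norm (\<psi> x - \<psi> x0)"
        using inj_deriv_lower[OF der] injD x0W by blast
      have "hx differentiable (at (E y0))"
        using hxd cubeO Ey0 Oo by (metis at_within_open differentiable_on_def subsetD)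
      then have "(hx \<circ> E) differentiable (at y0)" by (rule differentiable_chain_at[OF Ed])
      then have "(choi \<circ> (hx \<circ> E)) differentiable (at y0)"
        by (rule differentiable_chain_at) (rule choi_diff)
      then have phid: "\<phi> differentiable (at y0)" by (simp add: \<phi>_def[abs_def] o_def)
      obtain B1 \<delta>1 where d1: "\<delta>1 > 0"
        and up: "\<And>y. norm (y - y0) < \<delta>1 \<Longrightarrow> norm (\<phi> y - \<phi> y0) \<le> B1 * norm (y - y0)"
        using deriv_upper[OF phid] by blast
      have cg: "continuous_on (\<psi> ` W) g" using hom by (simp add: homeomorphism_def)
      obtain \<epsilon> where e: "\<epsilon> > 0" and ge: "\<And>z. z \<in> \<psi> ` W \<Longrightarrow> dist z (\<phi> y0) < \<epsilon> \<Longrightarrow> dist (g z) x0 < \<delta>"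
        using cg py0 c(2) unfolding continuous_on_iff x0_def by metis
      have "isCont \<phi> y0" using differentiable_imp_continuous_within[OF phid] by simp
      then obtain \<delta>2 where d2: "\<delta>2 > 0" and pe: "\<And>y. dist y y0 < \<delta>2 \<Longrightarrow> dist (\<phi> y) (\<phi> y0) < \<epsilon>"
        using e unfolding continuous_at_eps_delta by metis
      show "\<exists>T B. open T \<and> y0 \<in> T \<and> (\<forall>y\<in>S \<inter> T. norm ((g \<circ> \<phi>) y - (g \<circ> \<phi>) y0) \<le> B * norm (y - y0))"
      proof (intro exI conjI ballI)
        show "open (ball y0 (min \<delta>1 \<delta>2))" by simp
        show "y0 \<in> ball y0 (min \<delta>1 \<delta>2)" using d1 d2 by simp
        fix y assume y: "y \<in> S \<inter> ball y0 (min \<delta>1 \<delta>2)"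
        then have pyW: "\<phi> y \<in> \<psi> ` W" by (auto simp: S_def)
        have dy1: "norm (y - y0) < \<delta>1" and dy2: "dist y y0 < \<delta>2"
          using y by (auto simp: dist_norm norm_minus_commute)
        define x where "x = g (\<phi> y)"
        have psix: "\<psi> x = \<phi> y" using homeomorphism_apply2[OF hom pyW] by (simp add: x_def)
        have "dist x x0 < \<delta>" using ge[OF pyW pe[OF dy2]] by (simp add: x_def)
        then have "c * norm (x - x0) \<le> norm (\<psi> x - \<psi> x0)" using low by (simp add: dist_norm)
        also have "\<dots> \<le> B1 * norm (y - y0)" using up[OF dy1] psix psix0 by simp
        finally have "norm (x - x0) \<le> (B1 / c) * norm (y - y0)"
          using c(1) by (simp add: field_simps)
        then show "norm ((g \<circ> \<phi>) y - (g \<circ> \<phi>) y0) \<le> (B1 / c) * norm (y - y0)"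
          by (simp add: x_def x0_def)
      qed
    qed
    then have "negligible {x \<in> W. \<psi> x \<in> H_set I h \<inter> U}" using Psub negligible_subset by blast
    then show ?thesis by (simp add: negligible_iff_null_sets)
  qed
qed

end
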